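(* Let $2\leq s<t$ and let $(a_1,\dots,a_t,n_1,\dots,n_s)$ be integers with $a_1\geq\cdots\geq a_t\geq 2$, $n_1\geq\cdots\geq n_s\geq 2$, $a_l\neq n_j$ for all $l,j$, and $\prod_{l=1}^t a_l!=\prod_{j=1}^s n_j!$. Let $i_2,\dots,i_s$ be distinct elements of $\{2,\dots,t\}$ with $n_1>a_1$ and $n_j>a_{i_j}$ for $j=2,\dots,s$. Put $m_1=a_1+1$, $k_1=n_1-a_1$, $m_j=a_{i_j}+1$, $k_j=n_j-a_{i_j}$ ($j=2,\dots,s$), and $\Delta(m,k)=m(m+1)\cdots(m+k-1)$, so that $\prod_{l\notin\{1,i_2,\dots,i_s\}}a_l!=\prod_{j=1}^s\Delta(m_j,k_j)$. Then: (i) none of the integers $m_1,m_1+1,\dots,m_1+k_1-1$ is a prime; (ii) with $a=\max_{l\notin\{1,i_2,\dots,i_s\}}a_l$, one has $$a\log(a)-a\leq\log(a!)\leq (k_1+\cdots+k_s)\log(2m_1).$$ *)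

theory Defs
  imports Complex_Main "HOL-Computational_Algebra.Primes"
begin

end

theory Submission
  imports Defs
begin


lemma mult_card:
  fixes p n B :: nat
  assumes "prime p" "n > 0" "n \<le> B"
  shows "multiplicity p n = card {i\<in>{1..B}. p ^ i dvd n}"
proof -
  have p2: "2 \<le> p" using assms(1) prime_ge_2_nat by blast
  have "p ^ multiplicity p n \<le> n" using multiplicity_dvd[of p n] assms(2) by (rule dvd_imp_le)
  moreover have "multiplicity p n < 2 ^ multiplicity p n" by (rule less_exp)
  moreover have "(2::nat) ^ multiplicity p n \<le> p ^ multiplicity p n" using p2 by (rule power_mono) simp
  ultimately have mB: "multiplicity p n \<le> B" using assms(3) by linarith
  have nu: "\<not> is_unit p" using assms(1) prime_gt_1_nat by auto
  have iff: "p ^ i dvd n \<longleftrightarrow> i \<le> multiplicity p n" for i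
    using power_dvd_iff_le_multiplicity[of n p i] assms(2) nu by simp
  have "{i\<in>{1..B}. p ^ i dvd n} = {1..multiplicity p n}"
    unfolding iff using mB by auto
  then show ?thesis by simp
qed

lemma legendre:
  fixes p n B :: nat
  assumes "prime p" "n \<le> B"
  shows "multiplicity p (fact n :: nat) = (\<Sum>i=1..B. n div p ^ i)"
  using assms(2)
proof (induction n)
  case 0 then show ?case by simp
next
  case (Suc n)
  have pe: "prime_elem p" using assms(1) by simp
  have "multiplicity p (fact (Suc n) :: nat) = multiplicity p (Suc n * fact n :: nat)"
    by (simp add: fact_Suc)
  also have "\<dots> = multiplicity p (Suc n) + multiplicity p (fact n :: nat)"
    by (rule prime_elem_multiplicity_mult_distrib[OF pe]) auto
  also have "multiplicity p (Suc n) = card {i\<in>{1..B}. p ^ i dvd Suc n}"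
    using Suc.prems by (intro mult_card assms(1)) auto
  also have "\<dots> = card ({1..B} \<inter> {i. p ^ i dvd Suc n})"
    by (intro arg_cong[where f=card]) auto
  also have "\<dots> = (\<Sum>i=1..B. if p ^ i dvd Suc n then 1 else 0)"
    by (simp add: sum.If_cases)
  also have "multiplicity p (fact n :: nat) = (\<Sum>i=1..B. n div p ^ i)"
    using Suc by simp
  also have "(\<Sum>i=1..B. if p ^ i dvd Suc n then 1 else 0) + (\<Sum>i=1..B. n div p ^ i)
     = (\<Sum>i=1..B. Suc n div p ^ i)"
    by (subst sum.distrib[symmetric], intro sum.cong refl) (auto simp: div_Suc dvd_eq_mod_eq_0)
  finally show ?case .
qed

lemma div2_le: "q > 0 \<Longrightarrow> (2 * N) div q \<le> 2 * (N div q) + (if q \<le> 2 * N then 1 else 0)"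
  for q N :: nat
proof (cases "q \<le> 2 * N")
  case True
  assume q: "q > 0"
  have "N = q * (N div q) + N mod q" by simp
  moreover have "N mod q < q" using q by simp
  ultimately have "N < q * (N div q) + q" by linarith
  then have "2 * N < 2 * (q * (N div q)) + 2 * q" by linarith
  also have "\<dots> = q * (2 * (N div q) + 2)" by (simp add: algebra_simps)
  finally have "2 * N < q * (2 * (N div q) + 2)" .
  then have "(2 * N) div q < 2 * (N div q) + 2" using q by (simp add: div_less_iff_less_mult mult.commute)
  then show ?thesis using True by simp
next
  case False then show ?thesis by simp
qed

lemma mult_binom:
  fixes p N :: nat
  assumes "prime p"
  shows "multiplicity p ((2*N) choose N) + 2 * (\<Sum>i=1..2*N. N div p^i) = (\<Sum>i=1..2*N. (2*N) div p^i)"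
proof -
  have pe: "prime_elem p" using assms(1) by simp
  have f: "fact N * fact N * ((2*N) choose N) = (fact (2*N) :: nat)"
    using binomial_fact_lemma[of N "2*N"] by simp
  have "(\<Sum>i=1..2*N. (2*N) div p^i) = multiplicity p (fact (2*N) :: nat)"
    by (rule legendre[symmetric, OF assms]) simp
  also have "\<dots> = multiplicity p (fact N * fact N * ((2*N) choose N) :: nat)" using f by simp
  also have "\<dots> = multiplicity p (fact N * fact N :: nat) + multiplicity p ((2*N) choose N)"
    by (rule prime_elem_multiplicity_mult_distrib[OF pe]) auto
  also have "multiplicity p (fact N * fact N :: nat) = 2 * multiplicity p (fact N :: nat)"
    by (subst prime_elem_multiplicity_mult_distrib[OF pe]) auto
  also have "multiplicity p (fact N :: nat) = (\<Sum>i=1..2*N. N div p^i)"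
    by (rule legendre[OF assms]) simp
  finally show ?thesis by simp
qed

lemma binom_pp_le:
  fixes p N :: nat
  assumes "prime p" "N \<ge> 1"
  shows "p ^ multiplicity p ((2*N) choose N) \<le> 2*N"
proof -
  define v where "v = multiplicity p ((2*N) choose N)"
  define S where "S = {i\<in>{1..2*N}. p^i \<le> 2*N}"
  have p0: "p > 0" using assms(1) prime_gt_0_nat by blast
  have "v + 2 * (\<Sum>i=1..2*N. N div p^i) = (\<Sum>i=1..2*N. (2*N) div p^i)"
    unfolding v_def by (rule mult_binom[OF assms(1)])
  also have "\<dots> \<le> (\<Sum>i=1..2*N. 2 * (N div p^i) + (if p^i \<le> 2*N then 1 else 0))"
    by (intro sum_mono div2_le) (simp add: p0)
  also have "\<dots> = 2 * (\<Sum>i=1..2*N. N div p^i) + card ({1..2*N} \<inter> {i. p^i \<le> 2*N})"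
    by (simp add: sum.distrib sum_distrib_left sum.If_cases)
  also have "{1..2*N} \<inter> {i. p^i \<le> 2*N} = S" unfolding S_def by auto
  finally have vS: "v \<le> card S" by simp
  show ?thesis
  proof (rule ccontr)
    assume "\<not> p ^ multiplicity p ((2*N) choose N) \<le> 2*N"
    then have big: "2*N < p ^ v" unfolding v_def by simp
    have "v \<noteq> 0" using big assms(2) by (intro notI) simp
    have "S \<subseteq> {1..<v}"
    proof
      fix i assume "i \<in> S"
      then have "p ^ i < p ^ v" "1 \<le> i" using big unfolding S_def by auto
      then have "i < v" using power_less_imp_less_exp[of p i v] assms(1) prime_gt_1_nat by blast
      then show "i \<in> {1..<v}" using \<open>1 \<le> i\<close> by simp
    qed
    then have "card S \<le> v - 1" using card_mono[of "{1..<v}" S] by simp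
    then show False using vS \<open>v \<noteq> 0\<close> by simp
  qed
qed

lemma binom_no_mid:
  fixes p N :: nat
  assumes "prime p" "N \<ge> 5" "p \<le> N" "2*N < 3*p"
  shows "multiplicity p ((2*N) choose N) = 0"
proof -
  have p0: "p > 0" using assms(1) prime_gt_0_nat by blast
  have "4*N*N < 9*(p*p)" using mult_strict_mono[OF assms(4) assms(4)] p0 by (simp add: algebra_simps)
  moreover have "20*N \<le> 4*N*N" using assms(2) by simp
  ultimately have pp: "2*N < p*p" by linarith
  have pt: "(2*N) div p^i \<le> 2 * (N div p^i)" if "i \<in> {1..2*N}" for i
  proof (cases "i = 1")
    case True
    have "N div p = 1" using assms(3,4) by (intro div_nat_eqI) auto
    moreover have "(2*N) div p = 2" using assms(3,4) by (intro div_nat_eqI) auto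
    ultimately show ?thesis using True by simp
  next
    case False
    then have "i \<ge> 2" using that by simp
    then have "p^2 \<le> p^i" using p0 by (simp add: power_increasing)
    then have "2*N < p^i" using pp by (simp add: power2_eq_square)
    then show ?thesis by simp
  qed
  have "multiplicity p ((2*N) choose N) + 2 * (\<Sum>i=1..2*N. N div p^i) = (\<Sum>i=1..2*N. (2*N) div p^i)"
    by (rule mult_binom[OF assms(1)])
  also have "\<dots> \<le> (\<Sum>i=1..2*N. 2 * (N div p^i))" by (intro sum_mono pt)
  finally show ?thesis by (simp add: sum_distrib_left)
qed


lemma prod_primes_dvd:
  fixes n :: nat
  assumes "finite A" "\<forall>p\<in>A. prime p" "\<forall>p\<in>A. p dvd n"
  shows "\<Prod>A dvd n"
  using assms
proof (induction A rule: finite_induct)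
  case empty then show ?case by simp
next
  case (insert p A)
  have "coprime p (\<Prod>A)" using insert
    by (intro prod_coprime_right) (auto intro: primes_coprime)
  then show ?case using insert by (simp add: divides_mult)
qed

lemma binom_odd_le: "((2*m+1) choose m) \<le> (4::nat)^m"
proof -
  have "2 * ((2*m+1) choose m) = ((2*m+1) choose m) + ((2*m+1) choose (m+1))"
    using binomial_symmetric[of m "2*m+1"] by simp
  also have "\<dots> = (\<Sum>k\<in>{m, m+1}. (2*m+1) choose k)" by simp
  also have "\<dots> \<le> (\<Sum>k\<le>2*m+1. (2*m+1) choose k)" by (intro sum_mono2) auto
  also have "\<dots> = 2 ^ (2*m+1)" by (rule choose_row_sum)
  also have "\<dots> = 2 * 4 ^ m" by (simp add: power_mult)
  finally show ?thesis by simp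
qed

lemma primorial_le: "\<Prod>{p::nat. prime p \<and> p \<le> n} \<le> 4 ^ n"
proof (induction n rule: less_induct)
  case (less n)
  show ?case
  proof (cases "n \<le> 2")
    case True
    have p2: "p = 2" if "prime p" "p \<le> n" for p :: nat
      using prime_ge_2_nat[OF that(1)] that(2) True by linarith
    have "{p::nat. prime p \<and> p \<le> n} \<subseteq> {2}" using p2 by blast
    then have "{p::nat. prime p \<and> p \<le> n} = {} \<or> {p::nat. prime p \<and> p \<le> n} = {2}" by blast
    then show ?thesis
    proof
      assume e: "{p::nat. prime p \<and> p \<le> n} = {}"
      show ?thesis by (simp only: e prod.empty) simp
    next
      assume e: "{p::nat. prime p \<and> p \<le> n} = {2}"
      then have "2 \<le> n" by auto
      then have "(4::nat)^2 \<le> 4^n" by (intro power_increasing) auto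
      then show ?thesis using e by simp
    qed
  next
    case False
    show ?thesis
    proof (cases "even n")
      case True
      have "{p::nat. prime p \<and> p \<le> n} = {p. prime p \<and> p \<le> n - 1}"
      proof (intro set_eqI iffI)
        fix p assume "p \<in> {p::nat. prime p \<and> p \<le> n}"
        moreover have "\<not> prime n"
        proof
          assume "prime n"
          then have "odd n" using False by (intro prime_odd_nat) auto
          then show False using True by simp
        qed
        ultimately have "prime p" "p \<le> n" "p \<noteq> n" by auto
        then show "p \<in> {p. prime p \<and> p \<le> n - 1}" by simp
      qed auto
      moreover have "\<Prod>{p::nat. prime p \<and> p \<le> n - 1} \<le> 4 ^ (n - 1)" using less False by simp
      moreover have "(4::nat) ^ (n - 1) \<le> 4 ^ n" by (intro power_increasing) auto
      ultimately show ?thesis by (metis (no_types, lifting) order_trans)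
    next
      case odd: False
      then obtain m where n: "n = 2*m+1" by (metis oddE)
      have m1: "m \<ge> 1" using False n by simp
      define A where "A = {p::nat. prime p \<and> p \<le> m+1}"
      define B where "B = {p::nat. prime p \<and> m+1 < p \<and> p \<le> 2*m+1}"
      have fA: "finite A" unfolding A_def by simp
      have fB: "finite B" unfolding B_def by simp
      have eq: "{p::nat. prime p \<and> p \<le> n} = A \<union> B" unfolding A_def B_def n by auto
      have disj: "A \<inter> B = {}" unfolding A_def B_def by auto
      have "\<Prod>A \<le> 4 ^ (m+1)" unfolding A_def using less[of "m+1"] n m1 by simp
      moreover have "\<Prod>B \<le> 4 ^ m"
      proof -
        have "\<Prod>B dvd ((2*m+1) choose m)"
        proof (rule prod_primes_dvd[OF fB])
          show "\<forall>p\<in>B. prime p" unfolding B_def by auto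
          show "\<forall>p\<in>B. p dvd ((2*m+1) choose m)"
          proof
            fix p assume "p \<in> B"
            then have p: "prime p" "m+1 < p" "p \<le> 2*m+1" unfolding B_def by auto
            have f: "fact m * fact (m+1) * ((2*m+1) choose m) = (fact (2*m+1) :: nat)"
              using binomial_fact_lemma[of m "2*m+1"] by (simp add: algebra_simps)
            have "p dvd (fact (2*m+1) :: nat)" using p prime_dvd_fact_iff[of p "2*m+1"] by blast
            then have "p dvd fact m * fact (m+1) * ((2*m+1) choose m)" using f by simp
            moreover have "\<not> p dvd (fact m :: nat)" "\<not> p dvd (fact (m+1) :: nat)"
              using p prime_dvd_fact_iff[of p m] prime_dvd_fact_iff[of p "m+1"] by auto
            ultimately show "p dvd ((2*m+1) choose m)" using p(1) by (simp add: prime_dvd_mult_iff)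
          qed
        qed
        then have "\<Prod>B \<le> ((2*m+1) choose m)" by (rule dvd_imp_le) simp
        then show ?thesis using binom_odd_le[of m] by simp
      qed
      ultimately have "\<Prod>A * \<Prod>B \<le> 4 ^ (m+1) * 4 ^ m" by (rule mult_mono) auto
      also have "\<dots> = 4 ^ n" unfolding n by (simp add: power_add[symmetric])
      also have "\<Prod>A * \<Prod>B = \<Prod>{p::nat. prime p \<and> p \<le> n}"
        unfolding eq by (rule prod.union_disjoint[symmetric, OF fA fB disj])
      finally show ?thesis .
    qed
  qed
qed


lemma twelve: "j \<ge> 7 \<Longrightarrow> 12 * (j + 1) < (2::nat) ^ j"
proof (induction j rule: dec_induct)
  case base then show ?case by simp
next
  case (step j)
  then show ?case by simp
qed

lemma bertrand_large:
  fixes N :: nat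
  assumes N: "N \<ge> 8192"
  shows "\<exists>p. prime p \<and> N < p \<and> p \<le> 2*N"
proof (rule ccontr)
  assume nop: "\<not> (\<exists>p. prime p \<and> N < p \<and> p \<le> 2*N)"
  define C where "C = (2*N) choose N"
  have Cpos: "C > 0" unfolding C_def by simp
  define PF where "PF = prime_factors C"
  have fin: "finite PF" unfolding PF_def by simp
  have PFprime: "prime p" if "p \<in> PF" for p using that unfolding PF_def by auto
  have PFdvd: "p dvd C" if "p \<in> PF" for p using that unfolding PF_def by auto
  have "fact N * fact N * C = (fact (2*N) :: nat)"
    using binomial_fact_lemma[of N "2*N"] unfolding C_def by simp
  then have Cdvd: "C dvd fact (2*N)" by (metis dvd_triv_right)
  have PFle: "3*p \<le> 2*N" if "p \<in> PF" for p
  proof -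
    have pr: "prime p" using PFprime[OF that] .
    have "p dvd fact (2*N)" using PFdvd[OF that] Cdvd by (rule dvd_trans)
    then have "p \<le> 2*N" using prime_dvd_fact_iff[OF pr] by blast
    then have pN: "p \<le> N" using nop pr by (meson not_le)
    have "multiplicity p C \<noteq> 0"
    proof -
      have "p ^ 1 dvd C" using PFdvd[OF that] by simp
      then have "1 \<le> multiplicity p C"
        using power_dvd_iff_le_multiplicity[of C p 1] Cpos pr prime_gt_1_nat by auto
      then show ?thesis by simp
    qed
    moreover have N5: "N \<ge> 5" using N by simp
    ultimately show ?thesis using binom_no_mid[OF pr N5 pN] unfolding C_def by linarith
  qed
  have Ceq: "C = (\<Prod>p\<in>PF. p ^ multiplicity p C)" unfolding PF_def by (rule prime_factorization_nat[OF Cpos])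
  obtain j where j: "4^j \<le> 2*N" "2*N < 4^(j+1)" using ex_power_ivl1[of 4 "2*N"] N by auto
  have "4^7 < (4::nat)^(j+1)" using j N by simp
  then have j7: "j \<ge> 7" using power_less_imp_less_exp[of "4::nat" 7 "j+1"] by simp
  define P1 where "P1 = {p\<in>PF. p*p \<le> 2*N}"
  have P1sub: "P1 \<subseteq> PF" unfolding P1_def by auto
  have fP1: "finite P1" using fin P1sub finite_subset by blast
  have Cspl: "C = (\<Prod>p\<in>PF - P1. p ^ multiplicity p C) * (\<Prod>p\<in>P1. p ^ multiplicity p C)"
    by (rule trans[OF Ceq prod.subset_diff[OF P1sub fin]])
  have P1b: "(\<Prod>p\<in>P1. p ^ multiplicity p C) \<le> (2*N) ^ card P1"
  proof -
    have "(\<Prod>p\<in>P1. p ^ multiplicity p C) \<le> (\<Prod>p\<in>P1. 2*N)"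
      using N by (intro prod_mono) (auto simp: C_def P1_def PF_def intro!: binom_pp_le)
    then show ?thesis by simp
  qed
  have P2b: "(\<Prod>p\<in>PF - P1. p ^ multiplicity p C) \<le> 4 ^ ((2*N) div 3)"
  proof -
    have "(\<Prod>p\<in>PF - P1. p ^ multiplicity p C) \<le> (\<Prod>p\<in>PF - P1. p)"
    proof (intro prod_mono conjI)
      fix p assume p: "p \<in> PF - P1"
      have pr: "prime p" using p PFprime by auto
      have "p ^ multiplicity p C \<le> 2*N" unfolding C_def using binom_pp_le[OF pr] N by simp
      also have "2*N < p ^ 2" using p unfolding P1_def power2_eq_square by auto
      finally have "multiplicity p C < 2" using power_less_imp_less_exp[of p _ 2] pr prime_gt_1_nat by blast
      have "p \<ge> 1" using pr prime_gt_0_nat by (simp add: Suc_le_eq)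
      then show "p ^ multiplicity p C \<le> p" using \<open>multiplicity p C < 2\<close>
        by (cases "multiplicity p C") (auto simp: less_Suc_eq)
    qed simp
    also have "\<Prod>(PF - P1) \<le> \<Prod>{p::nat. prime p \<and> p \<le> (2*N) div 3}"
    proof (rule dvd_imp_le)
      show "\<Prod>(PF - P1) dvd \<Prod>{p::nat. prime p \<and> p \<le> (2*N) div 3}"
        by (rule prod_dvd_prod_subset) (auto dest: PFprime PFle)
      show "0 < \<Prod>{p::nat. prime p \<and> p \<le> (2*N) div 3}"
        by (auto intro!: prod_pos dest: prime_gt_0_nat)
    qed
    also have "\<dots> \<le> 4 ^ ((2*N) div 3)" by (rule primorial_le)
    finally show ?thesis .
  qed
  have cardb: "card P1 + 1 \<le> 2^(j+1)"
  proof -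
    have "P1 \<subseteq> {1..<2^(j+1)}"
    proof
      fix p assume p: "p \<in> P1"
      then have "p*p < 2^(j+1) * 2^(j+1)" using j(2) unfolding P1_def
        by (simp add: power_mult_distrib[symmetric] power_mult[symmetric])
      then have "p < 2^(j+1)" by (meson mult_le_mono not_le)
      moreover have "p \<ge> 1" using p PFprime P1sub prime_gt_0_nat by (auto simp: Suc_le_eq)
      ultimately show "p \<in> {1..<2^(j+1)}" by simp
    qed
    then have "card P1 \<le> 2^(j+1) - 1" using card_mono[of "{1..<2^(j+1)}" P1] by simp
    moreover have "(2::nat)^(j+1) \<ge> 1" by simp
    ultimately show ?thesis by linarith
  qed
  have lowb: "4^N \<le> 2*N * C"
  proof -
    have "4^N / (2*real N) \<le> real C" unfolding C_def
      using central_binomial_lower_bound[of N] N by simp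
    then have "4^N \<le> real C * (2 * real N)" using N by (simp add: field_simps)
    then have "real (4^N) \<le> real (2*N*C)" by (simp add: algebra_simps)
    then show ?thesis by (simp only: of_nat_le_iff)
  qed
  have "C \<le> 4 ^ ((2*N) div 3) * (2*N) ^ card P1"
    by (subst Cspl, rule mult_le_mono[OF P2b P1b])
  then have "4^N \<le> 2*N * (4 ^ ((2*N) div 3) * (2*N) ^ card P1)"
    by (rule order_trans[OF lowb mult_le_mono2])
  also have "\<dots> = (2*N) ^ (card P1 + 1) * 4 ^ ((2*N) div 3)" by (simp add: mult_ac)
  also have "\<dots> \<le> (4^(j+1)) ^ (2^(j+1)) * 4 ^ ((2*N) div 3)"
  proof -
    have "(2*N) ^ (card P1 + 1) \<le> (4^(j+1)) ^ (card P1 + 1)" using j(2) by (intro power_mono) auto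
    also have "\<dots> \<le> (4^(j+1)) ^ (2^(j+1))"
      using \<open>card P1 + 1 \<le> 2^(j+1)\<close> by (intro power_increasing) auto
    finally show ?thesis by simp
  qed
  also have "\<dots> = 4 ^ ((j+1) * 2^(j+1) + (2*N) div 3)" by (simp add: power_mult power_add)
  finally have "N \<le> (j+1) * 2^(j+1) + (2*N) div 3"
    using power_le_imp_le_exp[of 4] by simp
  then have "3*N \<le> 3*((j+1) * 2^(j+1)) + 2*N" by linarith
  then have A: "N \<le> 6*(j+1)*2^j" by (simp add: algebra_simps)
  have "12*(j+1)*2^j < 2^j * 2^j" using twelve[OF j7] by simp
  also have "\<dots> = 4^j" by (simp add: power_mult_distrib[symmetric])
  finally show False using A j(1) by linarith
qed


function nd2 :: "nat \<Rightarrow> nat \<Rightarrow> bool" where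
  "nd2 p d = (if p < d * d then True else (p mod d \<noteq> 0 \<and> nd2 p (Suc d)))"
  by auto
termination
proof (relation "measure (\<lambda>(p, d). Suc p - d)")
  fix p d :: nat assume "\<not> p < d * d"
  then have "d \<le> p" by (cases d) auto
  then show "((p, Suc d), p, d) \<in> measure (\<lambda>(p, d). Suc p - d)" by simp
qed auto

declare nd2.simps[simp del]
lemma nd2_stop: "p < d * d \<Longrightarrow> nd2 p d = True" by (simp add: nd2.simps)
lemma nd2_step: "\<not> p < d * d \<Longrightarrow> nd2 p d = (p mod d \<noteq> 0 \<and> nd2 p (Suc d))"
  by (subst nd2.simps) simp

lemma nd2_prime:
  "nd2 p d \<Longrightarrow> 2 \<le> d \<Longrightarrow> (\<forall>e. 2 \<le> e \<longrightarrow> e < d \<longrightarrow> \<not> e dvd p) \<Longrightarrow> 2 \<le> p \<Longrightarrow> prime p"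
proof (induction p d rule: nd2.induct)
  case (1 p d)
  show ?case
  proof (cases "p < d * d")
    case False
    then have "p mod d \<noteq> 0" "nd2 p (Suc d)" using "1.prems"(1) nd2_step by auto
    then have "\<forall>e. 2 \<le> e \<longrightarrow> e < Suc d \<longrightarrow> \<not> e dvd p"
      using "1.prems"(3) by (auto simp: less_Suc_eq dvd_eq_mod_eq_0)
    then show ?thesis using "1.IH"[OF False] "1.prems" False \<open>nd2 p (Suc d)\<close> by auto
  next
    case True
    show ?thesis
    proof (rule ccontr)
      assume np: "\<not> prime p"
      then obtain m where m: "m dvd p" "m \<noteq> 1" "m \<noteq> p"
        using "1.prems"(4) prime_nat_iff by auto
      then obtain r where r: "p = m * r" by blast
      have m0: "m \<noteq> 0" using r "1.prems"(4) by (intro notI) simp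
      have r0: "r \<noteq> 0" using r "1.prems"(4) by (intro notI) simp
      have r1: "r \<noteq> 1" using r m(3) by (intro notI) simp
      have m2: "2 \<le> m" using m0 m(2) by linarith
      have r2: "2 \<le> r" using r0 r1 by linarith
      have "m < d \<or> r < d"
      proof (rule ccontr)
        assume "\<not> (m < d \<or> r < d)"
        then have "d * d \<le> m * r" by (intro mult_le_mono) auto
        then show False using True r by simp
      qed
      then show False
      proof
        assume "m < d" then show False using "1.prems"(3) m2 m(1) by blast
      next
        assume "r < d" then show False using "1.prems"(3) r2 r by auto
      qed
    qed
  qed
qed

lemma prime_check: "nd2 p 2 \<Longrightarrow> 2 \<le> p \<Longrightarrow> prime p"
  by (erule nd2_prime) auto

lemma bert_step: "prime q \<Longrightarrow> q \<le> 2 * a \<Longrightarrow> a \<le> N \<Longrightarrow> N < q \<Longrightarrow> \<exists>p. prime p \<and> N < p \<and> p \<le> 2 * N"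
  for q a N :: nat by (rule exI[of _ q]) auto

lemma bertrand_small:
  fixes N :: nat
  assumes "1 \<le> N" "N < 8192"
  shows "\<exists>p. prime p \<and> N < p \<and> p \<le> 2*N"
proof -
  have P: "prime (2::nat)" "prime (3::nat)" "prime (5::nat)" "prime (7::nat)" "prime (13::nat)"
    "prime (23::nat)" "prime (43::nat)" "prime (83::nat)" "prime (163::nat)" "prime (317::nat)"
    "prime (631::nat)" "prime (1259::nat)" "prime (2503::nat)" "prime (5003::nat)" "prime (9973::nat)"
    by (rule prime_check; simp add: nd2_stop nd2_step)+
  have h1: "N < 2 \<Longrightarrow> ?thesis" using assms(1) by (intro bert_step[OF P(1), of 1]) auto
  have h2: "N < 3 \<Longrightarrow> ?thesis"
  proof (cases "N < 2")
    case True then show ?thesis by (rule h1)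
  next
    case False assume "N < 3"
    then show ?thesis using False by (intro bert_step[OF P(2), of 2]) auto
  qed
  have h3: "N < 5 \<Longrightarrow> ?thesis"
  proof (cases "N < 3")
    case True then show ?thesis by (rule h2)
  next
    case False assume "N < 5"
    then show ?thesis using False by (intro bert_step[OF P(3), of 3]) auto
  qed
  have h4: "N < 7 \<Longrightarrow> ?thesis"
  proof (cases "N < 5")
    case True then show ?thesis by (rule h3)
  next
    case False assume "N < 7"
    then show ?thesis using False by (intro bert_step[OF P(4), of 5]) auto
  qed
  have h5: "N < 13 \<Longrightarrow> ?thesis"
  proof (cases "N < 7")
    case True then show ?thesis by (rule h4)
  next
    case False assume "N < 13"
    then show ?thesis using False by (intro bert_step[OF P(5), of 7]) auto
  qed
  have h6: "N < 23 \<Longrightarrow> ?thesis"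
  proof (cases "N < 13")
    case True then show ?thesis by (rule h5)
  next
    case False assume "N < 23"
    then show ?thesis using False by (intro bert_step[OF P(6), of 13]) auto
  qed
  have h7: "N < 43 \<Longrightarrow> ?thesis"
  proof (cases "N < 23")
    case True then show ?thesis by (rule h6)
  next
    case False assume "N < 43"
    then show ?thesis using False by (intro bert_step[OF P(7), of 23]) auto
  qed
  have h8: "N < 83 \<Longrightarrow> ?thesis"
  proof (cases "N < 43")
    case True then show ?thesis by (rule h7)
  next
    case False assume "N < 83"
    then show ?thesis using False by (intro bert_step[OF P(8), of 43]) auto
  qed
  have h9: "N < 163 \<Longrightarrow> ?thesis"
  proof (cases "N < 83")
    case True then show ?thesis by (rule h8)
  next
    case False assume "N < 163"
    then show ?thesis using False by (intro bert_step[OF P(9), of 83]) auto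
  qed
  have h10: "N < 317 \<Longrightarrow> ?thesis"
  proof (cases "N < 163")
    case True then show ?thesis by (rule h9)
  next
    case False assume "N < 317"
    then show ?thesis using False by (intro bert_step[OF P(10), of 163]) auto
  qed
  have h11: "N < 631 \<Longrightarrow> ?thesis"
  proof (cases "N < 317")
    case True then show ?thesis by (rule h10)
  next
    case False assume "N < 631"
    then show ?thesis using False by (intro bert_step[OF P(11), of 317]) auto
  qed
  have h12: "N < 1259 \<Longrightarrow> ?thesis"
  proof (cases "N < 631")
    case True then show ?thesis by (rule h11)
  next
    case False assume "N < 1259"
    then show ?thesis using False by (intro bert_step[OF P(12), of 631]) auto
  qed
  have h13: "N < 2503 \<Longrightarrow> ?thesis"
  proof (cases "N < 1259")
    case True then show ?thesis by (rule h12)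
  next
    case False assume "N < 2503"
    then show ?thesis using False by (intro bert_step[OF P(13), of 1259]) auto
  qed
  have h14: "N < 5003 \<Longrightarrow> ?thesis"
  proof (cases "N < 2503")
    case True then show ?thesis by (rule h13)
  next
    case False assume "N < 5003"
    then show ?thesis using False by (intro bert_step[OF P(14), of 2503]) auto
  qed
  have h15: "N < 9973 \<Longrightarrow> ?thesis"
  proof (cases "N < 5003")
    case True then show ?thesis by (rule h14)
  next
    case False assume "N < 9973"
    then show ?thesis using False by (intro bert_step[OF P(15), of 5003]) auto
  qed
  show ?thesis using assms(2) by (intro h15) simp
qed

lemma bertrand:
  fixes N :: nat
  assumes "1 \<le> N"
  shows "\<exists>p. prime p \<and> N < p \<and> p \<le> 2*N"
  using bertrand_small[OF assms] bertrand_large by (cases "N < 8192") auto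


lemma pow_le_exp_fact: "real n ^ n \<le> exp (real n) * fact n"
proof (induction n)
  case 0 then show ?case by simp
next
  case (Suc n)
  have e: "(real n + 1) ^ n \<le> exp 1 * real n ^ n"
  proof (cases "n = 0")
    case True then show ?thesis by simp
  next
    case False
    then have np: "real n > 0" by simp
    have eq1: "real n + 1 = real n * (1 + 1 / real n)" using np by (simp add: field_simps)
    have "(1 + 1 / real n) ^ n \<le> exp (1 / real n) ^ n"
      using exp_ge_add_one_self[of "1 / real n"] by (intro power_mono) (auto simp: add.commute)
    also have "exp (1 / real n) ^ n = exp 1"
      using np by (simp add: exp_of_nat_mult[symmetric])
    finally have b: "(1 + 1 / real n) ^ n \<le> exp 1" .
    have "(real n + 1) ^ n = (real n * (1 + 1 / real n)) ^ n" by (subst eq1) (rule refl)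
    also have "\<dots> = real n ^ n * (1 + 1 / real n) ^ n" by (simp add: power_mult_distrib)
    also have "\<dots> \<le> real n ^ n * exp 1" using b by (intro mult_left_mono) auto
    finally show ?thesis by (simp add: mult.commute)
  qed
  have "real (Suc n) ^ Suc n = (real n + 1) * (real n + 1) ^ n" by (simp add: add.commute)
  also have "\<dots> \<le> (real n + 1) * (exp 1 * real n ^ n)" using e by (intro mult_left_mono) auto
  also have "\<dots> \<le> (real n + 1) * (exp 1 * (exp (real n) * fact n))"
    using Suc.IH by (intro mult_left_mono) auto
  also have "\<dots> = exp (real (Suc n)) * fact (Suc n)"
    by (simp add: exp_add[symmetric] algebra_simps)
  finally show ?case .
qed

lemma ln_fact_lower:
  assumes "n \<ge> 1"
  shows "real n * ln (real n) - real n \<le> ln (fact n)"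
proof -
  have np: "real n > 0" using assms by simp
  have "ln (real n ^ n) \<le> ln (exp (real n) * fact n)"
    using pow_le_exp_fact[of n] np by (subst ln_le_cancel_iff) auto
  also have "\<dots> = real n + ln (fact n)" by (simp add: ln_mult)
  also have "ln (real n ^ n) = real n * ln (real n)" using np by (simp add: ln_realpow)
  finally show ?thesis by simp
qed

lemma fact_le_pow: "m \<le> k \<Longrightarrow> (fact k :: nat) \<le> fact m * k ^ (k - m)"
proof (induction k rule: dec_induct)
  case base then show ?case by simp
next
  case (step n)
  have "(fact (Suc n) :: nat) = Suc n * fact n" by simp
  also have "\<dots> \<le> Suc n * (fact m * n ^ (n - m))" by (intro mult_le_mono2 step.IH)
  also have "\<dots> \<le> Suc n * (fact m * Suc n ^ (n - m))" by (intro mult_le_mono2 mult_le_mono2 power_mono) auto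
  also have "\<dots> = fact m * Suc n ^ (Suc n - m)" using step.hyps(1) by (simp add: Suc_diff_le algebra_simps)
  finally show ?case .
qed

theorem lemma2p3:
  fixes s t :: nat and a n i :: "nat \<Rightarrow> nat"
  assumes st: "2 \<le> s" "s < t"
    and a_mono: "\<And>l l'. 1 \<le> l \<Longrightarrow> l \<le> l' \<Longrightarrow> l' \<le> t \<Longrightarrow> a l' \<le> a l"
    and a_ge2: "\<And>l. 1 \<le> l \<Longrightarrow> l \<le> t \<Longrightarrow> 2 \<le> a l"
    and n_mono: "\<And>j j'. 1 \<le> j \<Longrightarrow> j \<le> j' \<Longrightarrow> j' \<le> s \<Longrightarrow> n j' \<le> n j"
    and n_ge2: "\<And>j. 1 \<le> j \<Longrightarrow> j \<le> s \<Longrightarrow> 2 \<le> n j"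
    and a_ne_n: "\<And>l j. l \<in> {1..t} \<Longrightarrow> j \<in> {1..s} \<Longrightarrow> a l \<noteq> n j"
    and fact_eq: "(\<Prod>l=1..t. fact (a l) :: nat) = (\<Prod>j=1..s. fact (n j))"
    and i_inj: "inj_on i {2..s}"
    and i_range: "i ` {2..s} \<subseteq> {2..t}"
    and n1_gt: "n 1 > a 1"
    and nj_gt: "\<And>j. j \<in> {2..s} \<Longrightarrow> n j > a (i j)"
  shows "(\<forall>x \<in> {a 1 + 1 ..< (a 1 + 1) + (n 1 - a 1)}. \<not> prime x)
    \<and> (let A = Max (a ` ({1..t} - ({1} \<union> i ` {2..s})));
           K = (n 1 - a 1) + (\<Sum>j=2..s. n j - a (i j));
           m1 = a 1 + 1
       in real A * ln (real A) - real A \<le> ln (fact A)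
          \<and> ln (fact A) \<le> real K * ln (2 * real m1))"
proof -
  have a_le1: "a l \<le> a 1" if "l \<in> {1..t}" for l using a_mono[of 1 l] that by auto
  have n_le1: "n j \<le> n 1" if "j \<in> {1..s}" for j using n_mono[of 1 j] that by auto
  have part1: "\<forall>x \<in> {a 1 + 1 ..< (a 1 + 1) + (n 1 - a 1)}. \<not> prime x"
  proof
    fix x assume x: "x \<in> {a 1 + 1 ..< (a 1 + 1) + (n 1 - a 1)}"
    show "\<not> prime x"
    proof
      assume px: "prime x"
      have "x \<le> n 1" "1 \<le> x" using x n1_gt by auto
      then have "x dvd (fact (n 1) :: nat)" by (intro dvd_fact)
      also have "(fact (n 1) :: nat) dvd (\<Prod>j=1..s. fact (n j))" using st by (intro dvd_prodI) auto
      also have "\<dots> = (\<Prod>l=1..t. fact (a l))" by (rule fact_eq[symmetric])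
      finally have "x dvd (\<Prod>l=1..t. fact (a l) :: nat)" .
      then obtain l where l: "l \<in> {1..t}" "x dvd (fact (a l) :: nat)"
        using prime_dvd_prod_iff[OF finite_atLeastAtMost px, of "\<lambda>l. fact (a l)" 1 t] by blast
      then have "x \<le> a l" using prime_dvd_fact_iff[OF px] by blast
      then show False using a_le1[OF l(1)] x by simp
    qed
  qed
  define I where "I = {1} \<union> i ` {2..s}"
  define R where "R = {1..t} - I"
  have I_sub: "I \<subseteq> {1..t}" using i_range st unfolding I_def by auto
  have one_notin: "1 \<notin> i ` {2..s}" using i_range by auto
  have cardI: "card I \<le> s"
  proof -
    have "card I \<le> card {1::nat} + card (i ` {2..s})" unfolding I_def by (rule card_Un_le)
    also have "card (i ` {2..s}) \<le> card {2..s}" by (rule card_image_le) simp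
    finally show ?thesis using st by simp
  qed
  have finR: "finite R" unfolding R_def by simp
  have R_ne: "R \<noteq> {}"
  proof
    assume "R = {}"
    then have "{1..t} \<subseteq> I" unfolding R_def by auto
    then have "card {1..t} \<le> card I" by (intro card_mono) (auto simp: I_def)
    then show False using cardI st by simp
  qed
  define A where "A = Max (a ` R)"
  have "A \<in> a ` R" unfolding A_def using finR R_ne by (intro Max_in) auto
  then obtain l0 where l0: "l0 \<in> R" "A = a l0" by blast
  have A2: "A \<ge> 2" using l0 a_ge2 unfolding R_def by auto
  define K where "K = (n 1 - a 1) + (\<Sum>j=2..s. n j - a (i j))"
  define M where "M = 2 * (a 1 + 1)"
  have n1M: "n 1 \<le> M"
  proof (rule ccontr)
    assume "\<not> n 1 \<le> M"
    obtain p where p: "prime p" "a 1 + 1 < p" "p \<le> 2 * (a 1 + 1)" using bertrand[of "a 1 + 1"] by auto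
    then have "p \<in> {a 1 + 1 ..< (a 1 + 1) + (n 1 - a 1)}" using \<open>\<not> n 1 \<le> M\<close> unfolding M_def by auto
    then show False using part1 p(1) by blast
  qed
  have nM: "n j \<le> M" if "j \<in> {1..s}" for j using n_le1[OF that] n1M by simp
  have decomp_a: "(\<Prod>l=1..t. fact (a l) :: nat)
      = fact (a 1) * (\<Prod>j=2..s. fact (a (i j))) * (\<Prod>l\<in>R. fact (a l))"
  proof -
    have eqIR: "{1..t} = I \<union> R" using I_sub unfolding R_def by auto
    have finI: "finite I" using I_sub finite_subset by blast
    have disjIR: "I \<inter> R = {}" unfolding R_def by auto
    have "(\<Prod>l=1..t. fact (a l) :: nat) = (\<Prod>l\<in>I. fact (a l)) * (\<Prod>l\<in>R. fact (a l))"
      unfolding eqIR by (rule prod.union_disjoint[OF finI finR disjIR])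
    also have "(\<Prod>l\<in>I. fact (a l) :: nat) = fact (a 1) * (\<Prod>l\<in>i ` {2..s}. fact (a l))"
      unfolding I_def using one_notin by simp
    also have "(\<Prod>l\<in>i ` {2..s}. fact (a l) :: nat) = (\<Prod>j=2..s. fact (a (i j)))"
      using prod.reindex[OF i_inj, of "\<lambda>l. fact (a l)"] by simp
    finally show ?thesis by simp
  qed
  have decomp_n: "(\<Prod>j=1..s. fact (n j) :: nat) = fact (n 1) * (\<Prod>j=2..s. fact (n j))"
  proof -
    have "{1..s} = insert 1 {2..s}" using st by auto
    then show ?thesis by simp
  qed
  define F where "F = (\<Prod>j=2..s. fact (a (i j)) :: nat)"
  define PR where "PR = (\<Prod>l\<in>R. fact (a l) :: nat)"
  have b1: "(fact (n 1) :: nat) \<le> fact (a 1) * M ^ (n 1 - a 1)"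
  proof -
    have "(fact (n 1) :: nat) \<le> fact (a 1) * n 1 ^ (n 1 - a 1)" using n1_gt by (intro fact_le_pow) simp
    also have "\<dots> \<le> fact (a 1) * M ^ (n 1 - a 1)" using n1M by (intro mult_le_mono2 power_mono) auto
    finally show ?thesis .
  qed
  have b2: "(\<Prod>j=2..s. fact (n j) :: nat) \<le> F * M ^ (\<Sum>j=2..s. n j - a (i j))"
  proof -
    have "(\<Prod>j=2..s. fact (n j) :: nat) \<le> (\<Prod>j=2..s. fact (a (i j)) * M ^ (n j - a (i j)))"
    proof (rule prod_mono, rule conjI)
      fix j assume j: "j \<in> {2..s}"
      have "(fact (n j) :: nat) \<le> fact (a (i j)) * n j ^ (n j - a (i j))"
        using nj_gt[OF j] by (intro fact_le_pow) simp
      also have "\<dots> \<le> fact (a (i j)) * M ^ (n j - a (i j))"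
        using nM[of j] j by (intro mult_le_mono2 power_mono) auto
      finally show "(fact (n j) :: nat) \<le> fact (a (i j)) * M ^ (n j - a (i j))" .
    qed simp
    also have "\<dots> = F * M ^ (\<Sum>j=2..s. n j - a (i j))"
      unfolding F_def by (simp add: prod.distrib power_sum)
    finally show ?thesis .
  qed
  have "fact (a 1) * F * PR = fact (n 1) * (\<Prod>j=2..s. fact (n j) :: nat)"
    using fact_eq decomp_a decomp_n unfolding F_def PR_def by simp
  also have "\<dots> \<le> (fact (a 1) * M ^ (n 1 - a 1)) * (F * M ^ (\<Sum>j=2..s. n j - a (i j)))"
    by (rule mult_le_mono[OF b1 b2])
  also have "\<dots> = (fact (a 1) * F) * M ^ K" unfolding K_def by (simp add: power_add mult_ac)
  finally have "(fact (a 1) * F) * PR \<le> (fact (a 1) * F) * M ^ K" by (simp add: mult_ac)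
  moreover have "fact (a 1) * F > 0" unfolding F_def by (simp add: prod_pos)
  ultimately have PRle: "PR \<le> M ^ K" by simp
  have "(fact A :: nat) dvd PR" unfolding PR_def l0(2) by (rule dvd_prodI[OF finR l0(1)])
  moreover have "PR > 0" unfolding PR_def by (simp add: prod_pos)
  ultimately have "(fact A :: nat) \<le> PR" by (rule dvd_imp_le)
  with PRle have fAM: "(fact A :: nat) \<le> M ^ K" by simp
  have upper: "ln (fact A) \<le> real K * ln (2 * real (a 1 + 1))"
  proof -
    have "(fact A :: real) = real (fact A :: nat)" by simp
    also have "\<dots> \<le> real (M ^ K)" using fAM by (simp only: of_nat_le_iff)
    finally have "(fact A :: real) \<le> (2 * real (a 1 + 1)) ^ K" unfolding M_def by simp
    then have "ln (fact A) \<le> ln ((2 * real (a 1 + 1)) ^ K)" by (subst ln_le_cancel_iff) auto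
    also have "\<dots> = real K * ln (2 * real (a 1 + 1))" by (simp add: ln_realpow)
    finally show ?thesis .
  qed
  have lower: "real A * ln (real A) - real A \<le> ln (fact A)" using A2 by (intro ln_fact_lower) simp
  show ?thesis
    unfolding Let_def using part1 upper lower unfolding A_def K_def R_def I_def by simp
qed

end
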